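(* Let $f:\mathbb R^d\to\mathbb R$ be convex with a unique minimizer $x^*$. Let $(t_n)_{n\ge1}$ be positive numbers with $\sum_{n\ge1}t_n=\infty$, and let $(x_n)_{n\ge1}$ be a sequence in $\mathbb R^d$ such that $\|x_n-x^*\|\to z$ for some $z\ge0$ and $\sum_{n\ge1}t_n(f(x_n)-f(x^* ))<\infty$. Then $z=0$. *)

theory Defs
  imports "HOL-Analysis.Analysis"
begin

end

theory Submission
  imports Defs
begin

theorem lemma2:
  fixes f :: "'a::euclidean_space \<Rightarrow> real"
    and xstar :: 'a and t :: "nat \<Rightarrow> real" and x :: "nat \<Rightarrow> 'a" and z :: real
  assumes conv: "convex_on UNIV f"
    and min: "\<forall>y. f xstar \<le> f y"
    and uniq: "\<forall>w. (\<forall>y. f w \<le> f y) \<longrightarrow> w = xstar"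
    and tpos: "\<forall>n. t n > 0"
    and tdiv: "\<not> summable t"
    and zpos: "z \<ge> 0"
    and lim: "(\<lambda>n. norm (x n - xstar)) \<longlonglongrightarrow> z"
    and sumf: "summable (\<lambda>n. t n * (f (x n) - f xstar))"
  shows "z = 0"
proof (rule ccontr)
  assume "z \<noteq> 0"
  with zpos have zp: "z > 0" by simp
  define r where "r = z / 2"
  have rp: "r > 0" using zp by (simp add: r_def)
  have cont: "continuous_on UNIV f" using convex_on_continuous[OF open_UNIV conv] .
  have "\<exists>w\<in>sphere xstar r. \<forall>y\<in>sphere xstar r. f w \<le> f y"
    apply (rule continuous_attains_inf)
    using rp cont continuous_on_subset by auto
  then obtain w where w: "w \<in> sphere xstar r" and wmin: "\<forall>y\<in>sphere xstar r. f w \<le> f y" by blast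
  define m where "m = f w - f xstar"
  have mp: "m > 0"
  proof -
    have "m \<ge> 0" using min by (simp add: m_def)
    moreover have "m \<noteq> 0"
    proof
      assume "m = 0"
      hence "\<forall>y. f w \<le> f y" using min by (simp add: m_def)
      hence "w = xstar" using uniq by blast
      thus False using w rp by simp
    qed
    ultimately show ?thesis by simp
  qed
  have key: "f y - f xstar \<ge> m" if hy: "norm (y - xstar) \<ge> r" for y
  proof -
    define d where "d = norm (y - xstar)"
    have dp: "d > 0" using hy rp by (auto simp: d_def)
    define l where "l = r / d"
    have l0: "l > 0" "l \<le> 1" using rp dp hy by (auto simp: l_def d_def)
    define v where "v = (1 - l) *\<^sub>R xstar + l *\<^sub>R y"
    have "v - xstar = l *\<^sub>R (y - xstar)" by (simp add: v_def algebra_simps)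
    hence "norm (v - xstar) = l * d" using l0 by (simp add: d_def)
    also have "\<dots> = r" using dp by (simp add: l_def)
    finally have "v \<in> sphere xstar r" by (simp add: dist_norm norm_minus_commute)
    hence "f w \<le> f v" using wmin by blast
    also have "f v \<le> (1 - l) * f xstar + l * f y"
      unfolding v_def using convex_onD[OF conv] l0 by auto
    finally have "m \<le> l * (f y - f xstar)" by (simp add: m_def algebra_simps)
    also have "\<dots> \<le> f y - f xstar"
      using l0 min mult_left_le_one_le[of "f y - f xstar" l] by auto
    finally show ?thesis .
  qed
  have ev: "eventually (\<lambda>n. norm (x n - xstar) \<ge> r) sequentially"
    using order_tendstoD(1)[OF lim, of r] rp zp by (simp add: r_def eventually_mono)
  have "eventually (\<lambda>n. norm (t n) \<le> (1/m) * (t n * (f (x n) - f xstar))) sequentially"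
  proof (rule eventually_mono[OF ev])
    fix n assume "norm (x n - xstar) \<ge> r"
    hence "m \<le> f (x n) - f xstar" using key by blast
    hence "t n * m \<le> t n * (f (x n) - f xstar)" using tpos by (simp add: mult_left_mono less_imp_le)
    thus "norm (t n) \<le> (1/m) * (t n * (f (x n) - f xstar))"
      using tpos mp by (simp add: field_simps less_imp_le)
  qed
  hence "summable t" by (rule summable_comparison_test_ev) (rule summable_mult[OF sumf])
  thus False using tdiv by simp
qed

end
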